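(* Let $G$ be a finite symmetric two-player game with pure strategies $I=\{1,\dots,N\}$ and payoff matrix $U$, and let $G'$ be a game built on $G$ by adding mixed strategies as new pure strategies, with associated mixed strategies $p^k\in S_N$, $k\in I'=\{1,\dots,N'\}$. Let $x'(\cdot)$ be a solution of the best-response dynamics in $G'$ and define $x(t):=\sum_{k=1}^{N'}x'_k(t)\,p^k\in S_N$. Then $x(\cdot)$ is a solution of the best-response dynamics in $G$.
   Context: $G'$ with pure strategy set $I'=\{1,\dots,N,N+1,\dots,N'\}$ and payoff matrix $U'$ is built on $G$ by adding mixed strategies as new pure strategies if to each $i\in I'$ is associated $p^i\in S_N$ such that $e'_i\cdot U'e'_j=p^i\cdot Up^j$ for all $i,j\in I'$ (with $e'_i$ the vertices of $S_{N'}$), and $p^i=e_i$ for $1\le i\le N$. Best-response dynamics in a game with payoff matrix $U$: an absolutely continuous function $x(\cdot)$ with $\dot x(t)\in BR(x(t))-x(t)$ for almost every $t$, where $BR(x)=\{y\in S_N: y\cdot Ux=\max_{z\in S_N}z\cdot Ux\}$. *)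

theory Defs
  imports "HOL-Analysis.Analysis"
begin

text \<open>Strategies are indexed by natural numbers; a (mixed) strategy profile in a game
with N pure strategies is a function nat => real that vanishes outside 0..N-1.
Pure strategies 1..N of the paper correspond to indices 0..N-1.\<close>

definition strat_simplex :: "nat \<Rightarrow> (nat \<Rightarrow> real) set" where
  "strat_simplex N = {p. (\<forall>i<N. 0 \<le> p i) \<and> (\<Sum>i<N. p i) = 1 \<and> (\<forall>i\<ge>N. p i = 0)}"

definition unitv :: "nat \<Rightarrow> nat \<Rightarrow> real" where
  "unitv i = (\<lambda>j. if j = i then 1 else 0)"

definition pay :: "nat \<Rightarrow> (nat \<Rightarrow> nat \<Rightarrow> real) \<Rightarrow> (nat \<Rightarrow> real) \<Rightarrow> (nat \<Rightarrow> real) \<Rightarrow> real" where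
  "pay N U y x = (\<Sum>i<N. \<Sum>j<N. y i * U i j * x j)"

definition BR :: "nat \<Rightarrow> (nat \<Rightarrow> nat \<Rightarrow> real) \<Rightarrow> (nat \<Rightarrow> real) \<Rightarrow> (nat \<Rightarrow> real) set" where
  "BR N U x = {y \<in> strat_simplex N. \<forall>z \<in> strat_simplex N. pay N U z x \<le> pay N U y x}"

definition built_on :: "nat \<Rightarrow> (nat \<Rightarrow> nat \<Rightarrow> real) \<Rightarrow> nat \<Rightarrow> (nat \<Rightarrow> nat \<Rightarrow> real)
    \<Rightarrow> (nat \<Rightarrow> nat \<Rightarrow> real) \<Rightarrow> bool" where
  "built_on N U N' U' p \<longleftrightarrow> N \<le> N' \<and> (\<forall>k<N'. p k \<in> strat_simplex N) \<and>
     (\<forall>i<N'. \<forall>j<N'. U' i j = pay N U (p i) (p j)) \<and> (\<forall>i<N. p i = unitv i)"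

definition abs_cont_on :: "nat \<Rightarrow> real \<Rightarrow> real \<Rightarrow> (real \<Rightarrow> nat \<Rightarrow> real) \<Rightarrow> bool" where
  "abs_cont_on N a b x \<longleftrightarrow>
    (\<forall>\<epsilon>>0. \<exists>\<delta>>0. \<forall>(n::nat) (l::nat \<Rightarrow> real) r.
       (\<forall>k<n. a \<le> l k \<and> l k \<le> r k \<and> r k \<le> b) \<and>
       (\<forall>k<n. \<forall>k'<n. k \<noteq> k' \<longrightarrow> r k \<le> l k' \<or> r k' \<le> l k) \<and>
       (\<Sum>k<n. r k - l k) < \<delta>
       \<longrightarrow> (\<Sum>k<n. \<Sum>i<N. \<bar>x (r k) i - x (l k) i\<bar>) < \<epsilon>)"

definition loc_abs_cont_on :: "nat \<Rightarrow> real set \<Rightarrow> (real \<Rightarrow> nat \<Rightarrow> real) \<Rightarrow> bool" where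
  "loc_abs_cont_on N T x \<longleftrightarrow> (\<forall>a b. {a..b} \<subseteq> T \<longrightarrow> abs_cont_on N a b x)"

definition br_solution :: "nat \<Rightarrow> (nat \<Rightarrow> nat \<Rightarrow> real) \<Rightarrow> real set \<Rightarrow> (real \<Rightarrow> nat \<Rightarrow> real) \<Rightarrow> bool" where
  "br_solution N U T x \<longleftrightarrow>
     (\<forall>t\<in>T. x t \<in> strat_simplex N) \<and> loc_abs_cont_on N T x \<and>
     (AE t in lborel. t \<in> T \<longrightarrow>
        (\<exists>y \<in> BR N U (x t). \<forall>i<N. ((\<lambda>s. x s i) has_real_derivative (y i - x t i)) (at t)))"

end

theory Submission
  imports Defs
begin

definition mix :: "nat \<Rightarrow> (nat \<Rightarrow> real) \<Rightarrow> (nat \<Rightarrow> nat \<Rightarrow> real) \<Rightarrow> nat \<Rightarrow> real" where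
  "mix M a p = (\<lambda>i. \<Sum>k<M. a k * p k i)"

lemma pay_mix:
  "pay N U (mix M a p) (mix M b p) = (\<Sum>k<M. \<Sum>l<M. a k * b l * pay N U (p k) (p l))"
proof -
  have "pay N U (mix M a p) (mix M b p) =
     (\<Sum>i<N. \<Sum>j<N. \<Sum>k<M. \<Sum>l<M. a k * b l * (p k i * U i j * p l j))"
    unfolding pay_def mix_def
    by (simp add: sum_distrib_left sum_distrib_right mult_ac)
  also have "\<dots> = (\<Sum>k<M. \<Sum>l<M. \<Sum>i<N. \<Sum>j<N. a k * b l * (p k i * U i j * p l j))"
  proof -
    let ?F = "\<lambda>i j k l. a k * b l * (p k i * U i j * p l j)"
    have "(\<Sum>i<N. \<Sum>j<N. \<Sum>k<M. \<Sum>l<M. ?F i j k l) = (\<Sum>i<N. \<Sum>k<M. \<Sum>j<N. \<Sum>l<M. ?F i j k l)"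
      by (rule sum.cong[OF refl], rule sum.swap)
    also have "\<dots> = (\<Sum>i<N. \<Sum>k<M. \<Sum>l<M. \<Sum>j<N. ?F i j k l)"
      by (rule sum.cong[OF refl], rule sum.cong[OF refl], rule sum.swap)
    also have "\<dots> = (\<Sum>k<M. \<Sum>i<N. \<Sum>l<M. \<Sum>j<N. ?F i j k l)"
      by (rule sum.swap)
    also have "\<dots> = (\<Sum>k<M. \<Sum>l<M. \<Sum>i<N. \<Sum>j<N. ?F i j k l)"
      by (rule sum.cong[OF refl], rule sum.swap)
    finally show ?thesis .
  qed
  also have "\<dots> = (\<Sum>k<M. \<Sum>l<M. a k * b l * pay N U (p k) (p l))"
    unfolding pay_def by (simp add: sum_distrib_left)
  finally show ?thesis .
qed

lemma mix_simplex:
  assumes a: "a \<in> strat_simplex M" and p: "\<forall>k<M. p k \<in> strat_simplex N"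
  shows "mix M a p \<in> strat_simplex N"
proof -
  have pk: "\<And>k i. k < M \<Longrightarrow> i < N \<Longrightarrow> 0 \<le> p k i" "\<And>k. k < M \<Longrightarrow> (\<Sum>i<N. p k i) = 1"
    "\<And>k i. k < M \<Longrightarrow> i \<ge> N \<Longrightarrow> p k i = 0"
    using p by (auto simp: strat_simplex_def)
  have av: "\<And>k. k < M \<Longrightarrow> 0 \<le> a k" "(\<Sum>k<M. a k) = 1" using a by (auto simp: strat_simplex_def)
  have "(\<Sum>i<N. \<Sum>k<M. a k * p k i) = (\<Sum>k<M. a k * (\<Sum>i<N. p k i))"
    by (subst sum.swap) (simp add: sum_distrib_left)
  also have "\<dots> = 1" using pk(2) av(2) by simp
  finally show ?thesis unfolding strat_simplex_def mix_def
    using pk av by (auto intro!: sum_nonneg)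
qed

lemma mix_l1:
  assumes p: "\<forall>k<M. p k \<in> strat_simplex N"
  shows "(\<Sum>i<N. \<bar>\<Sum>k<M. d k * p k i\<bar>) \<le> (\<Sum>k<M. \<bar>d k\<bar>)"
proof -
  have pk: "\<And>k i. k < M \<Longrightarrow> i < N \<Longrightarrow> 0 \<le> p k i" "\<And>k. k < M \<Longrightarrow> (\<Sum>i<N. p k i) = 1"
    using p by (auto simp: strat_simplex_def)
  have "(\<Sum>i<N. \<bar>\<Sum>k<M. d k * p k i\<bar>) \<le> (\<Sum>i<N. \<Sum>k<M. \<bar>d k\<bar> * p k i)"
    apply (rule sum_mono)
    apply (rule order_trans[OF sum_abs])
    apply (rule sum_mono) using pk by (simp add: abs_mult)
  also have "\<dots> = (\<Sum>k<M. \<bar>d k\<bar> * (\<Sum>i<N. p k i))"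
    by (subst sum.swap) (simp add: sum_distrib_left)
  also have "\<dots> = (\<Sum>k<M. \<bar>d k\<bar>)" using pk(2) by simp
  finally show ?thesis .
qed

lemma embed:
  assumes z: "z \<in> strat_simplex N" and NM: "N \<le> M" and pu: "\<forall>i<N. p i = unitv i"
  shows "z \<in> strat_simplex M" "mix M z p = z"
proof -
  have zz: "\<And>i. i \<ge> N \<Longrightarrow> z i = 0" "(\<Sum>i<N. z i) = 1" "\<And>i. i<N \<Longrightarrow> 0 \<le> z i"
    using z by (auto simp: strat_simplex_def)
  have split: "\<And>f. (\<Sum>k<M. f k) = (\<Sum>k<N. f k) + (\<Sum>k\<in>{N..<M}. f k)"
    using NM by (metis atLeast0LessThan le0 sum.atLeastLessThan_concat)
  have "(\<Sum>k<M. z k) = 1" using split[of z] zz by simp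
  moreover have "\<forall>i<M. 0 \<le> z i"
  proof (intro allI impI)
    fix i assume "i < M" show "0 \<le> z i" using zz(1)[of i] zz(3)[of i] by (cases "i < N") auto
  qed
  moreover have "\<forall>i\<ge>M. z i = 0" using zz(1) NM by auto
  ultimately show "z \<in> strat_simplex M" unfolding strat_simplex_def by blast
  show "mix M z p = z"
  proof
    fix i
    have "mix M z p i = (\<Sum>k<N. z k * p k i)" unfolding mix_def using split[of "\<lambda>k. z k * p k i"] zz by simp
    also have "\<dots> = (\<Sum>k<N. if k = i then z k else 0)" using pu by (intro sum.cong) (auto simp: unitv_def)
    also have "\<dots> = z i" using zz by (simp add: sum.delta)
    finally show "mix M z p i = z i" .
  qed
qed

theorem proposition7:
  fixes N N' :: nat and U U' :: "nat \<Rightarrow> nat \<Rightarrow> real"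
    and p :: "nat \<Rightarrow> nat \<Rightarrow> real" and T :: "real set"
    and x' :: "real \<Rightarrow> nat \<Rightarrow> real"
  assumes "built_on N U N' U' p"
    and "is_interval T"
    and "br_solution N' U' T x'"
  shows "br_solution N U T (\<lambda>t i. \<Sum>k<N'. x' t k * p k i)"
proof -
  from assms(1) have NN: "N \<le> N'" and pS: "\<forall>k<N'. p k \<in> strat_simplex N"
    and U'd: "\<forall>i<N'. \<forall>j<N'. U' i j = pay N U (p i) (p j)" and pu: "\<forall>i<N. p i = unitv i"
    unfolding built_on_def by auto
  from assms(3) have S': "\<forall>t\<in>T. x' t \<in> strat_simplex N'" and AC': "loc_abs_cont_on N' T x'"
    and AE': "AE t in lborel. t \<in> T \<longrightarrow>
        (\<exists>y \<in> BR N' U' (x' t). \<forall>i<N'. ((\<lambda>s. x' s i) has_real_derivative (y i - x' t i)) (at t))"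
    unfolding br_solution_def by auto
  have xe: "(\<lambda>t i. \<Sum>k<N'. x' t k * p k i) = (\<lambda>t. mix N' (x' t) p)" by (simp add: mix_def)
  have payeq: "\<And>a b. pay N' U' a b = pay N U (mix N' a p) (mix N' b p)"
  proof -
    fix a b
    show "pay N' U' a b = pay N U (mix N' a p) (mix N' b p)"
      unfolding pay_mix by (unfold pay_def[of N' U'], intro sum.cong refl) (simp add: U'd mult_ac)
  qed
  have part1: "\<forall>t\<in>T. mix N' (x' t) p \<in> strat_simplex N" using S' pS mix_simplex by blast
  have part2: "loc_abs_cont_on N T (\<lambda>t. mix N' (x' t) p)"
    unfolding loc_abs_cont_on_def abs_cont_on_def
  proof (intro allI impI)
    fix a b \<epsilon> :: real assume ab: "{a..b} \<subseteq> T" and e: "\<epsilon> > 0"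
    have "abs_cont_on N' a b x'" using AC' ab unfolding loc_abs_cont_on_def by blast
    then obtain \<delta> where d: "\<delta> > 0" and H: "\<forall>(n::nat) (l::nat \<Rightarrow> real) r.
       (\<forall>k<n. a \<le> l k \<and> l k \<le> r k \<and> r k \<le> b) \<and>
       (\<forall>k<n. \<forall>k'<n. k \<noteq> k' \<longrightarrow> r k \<le> l k' \<or> r k' \<le> l k) \<and>
       (\<Sum>k<n. r k - l k) < \<delta>
       \<longrightarrow> (\<Sum>k<n. \<Sum>i<N'. \<bar>x' (r k) i - x' (l k) i\<bar>) < \<epsilon>"
      using e unfolding abs_cont_on_def by blast
    show "\<exists>\<delta>>0. \<forall>(n::nat) (l::nat \<Rightarrow> real) r.
       (\<forall>k<n. a \<le> l k \<and> l k \<le> r k \<and> r k \<le> b) \<and>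
       (\<forall>k<n. \<forall>k'<n. k \<noteq> k' \<longrightarrow> r k \<le> l k' \<or> r k' \<le> l k) \<and>
       (\<Sum>k<n. r k - l k) < \<delta>
       \<longrightarrow> (\<Sum>k<n. \<Sum>i<N. \<bar>mix N' (x' (r k)) p i - mix N' (x' (l k)) p i\<bar>) < \<epsilon>"
    proof (intro exI[of _ \<delta>] conjI d allI impI)
      fix n :: nat and l r :: "nat \<Rightarrow> real"
      assume c: "(\<forall>k<n. a \<le> l k \<and> l k \<le> r k \<and> r k \<le> b) \<and>
       (\<forall>k<n. \<forall>k'<n. k \<noteq> k' \<longrightarrow> r k \<le> l k' \<or> r k' \<le> l k) \<and>
       (\<Sum>k<n. r k - l k) < \<delta>"
      have "(\<Sum>k<n. \<Sum>i<N. \<bar>mix N' (x' (r k)) p i - mix N' (x' (l k)) p i\<bar>)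
          \<le> (\<Sum>k<n. \<Sum>i<N'. \<bar>x' (r k) i - x' (l k) i\<bar>)"
      proof (rule sum_mono)
        fix k
        have "(\<Sum>i<N. \<bar>mix N' (x' (r k)) p i - mix N' (x' (l k)) p i\<bar>)
            = (\<Sum>i<N. \<bar>\<Sum>j<N'. (x' (r k) j - x' (l k) j) * p j i\<bar>)"
          unfolding mix_def by (simp add: sum_subtractf left_diff_distrib)
        also have "\<dots> \<le> (\<Sum>j<N'. \<bar>x' (r k) j - x' (l k) j\<bar>)" by (rule mix_l1[OF pS])
        finally show "(\<Sum>i<N. \<bar>mix N' (x' (r k)) p i - mix N' (x' (l k)) p i\<bar>)
          \<le> (\<Sum>i<N'. \<bar>x' (r k) i - x' (l k) i\<bar>)" .
      qed
      also have "\<dots> < \<epsilon>" using H c by blast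
      finally show "(\<Sum>k<n. \<Sum>i<N. \<bar>mix N' (x' (r k)) p i - mix N' (x' (l k)) p i\<bar>) < \<epsilon>" .
    qed
  qed
  have part3: "AE t in lborel. t \<in> T \<longrightarrow>
        (\<exists>y \<in> BR N U (mix N' (x' t) p). \<forall>i<N. ((\<lambda>s. mix N' (x' s) p i) has_real_derivative (y i - mix N' (x' t) p i)) (at t))"
    using AE'
  proof eventually_elim
    case (elim t)
    show ?case
    proof
      assume tT: "t \<in> T"
      with elim obtain y' where y': "y' \<in> BR N' U' (x' t)"
        and D: "\<forall>i<N'. ((\<lambda>s. x' s i) has_real_derivative (y' i - x' t i)) (at t)" by blast
      have y'S: "y' \<in> strat_simplex N'" and y'b: "\<forall>z\<in>strat_simplex N'. pay N' U' z (x' t) \<le> pay N' U' y' (x' t)"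
        using y' unfolding BR_def by auto
      define y where "y = mix N' y' p"
      have "y \<in> BR N U (mix N' (x' t) p)"
        unfolding BR_def
      proof (intro CollectI conjI ballI)
        show "y \<in> strat_simplex N" unfolding y_def using mix_simplex[OF y'S pS] .
        fix z assume z: "z \<in> strat_simplex N"
        have zS: "z \<in> strat_simplex N'" and zm: "mix N' z p = z" using embed[OF z NN pu] by auto
        have "pay N U z (mix N' (x' t) p) = pay N' U' z (x' t)" using payeq zm by simp
        also have "\<dots> \<le> pay N' U' y' (x' t)" using y'b zS by blast
        also have "\<dots> = pay N U y (mix N' (x' t) p)" using payeq y_def by simp
        finally show "pay N U z (mix N' (x' t) p) \<le> pay N U y (mix N' (x' t) p)" .
      qed
      moreover have "\<forall>i<N. ((\<lambda>s. mix N' (x' s) p i) has_real_derivative (y i - mix N' (x' t) p i)) (at t)"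
      proof (intro allI impI)
        fix i
        have "((\<lambda>s. \<Sum>k<N'. x' s k * p k i) has_real_derivative (\<Sum>k<N'. (y' k - x' t k) * p k i)) (at t)"
          by (rule DERIV_sum) (use D in \<open>auto intro: DERIV_cmult_right\<close>)
        moreover have "(\<Sum>k<N'. (y' k - x' t k) * p k i) = y i - mix N' (x' t) p i"
          unfolding y_def mix_def by (simp add: sum_subtractf left_diff_distrib)
        ultimately show "((\<lambda>s. mix N' (x' s) p i) has_real_derivative (y i - mix N' (x' t) p i)) (at t)"
          unfolding mix_def by simp
      qed
      ultimately show "\<exists>y \<in> BR N U (mix N' (x' t) p). \<forall>i<N. ((\<lambda>s. mix N' (x' s) p i) has_real_derivative (y i - mix N' (x' t) p i)) (at t)"
        by blast
    qed
  qed
  show ?thesis unfolding xe br_solution_def using part1 part2 part3 by blast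
qed

end
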